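(* Let $x_1,\dots,x_n\in\mathbb R^p$ be fixed, $T\subseteq[p]$ with $|T|=t$, and $\epsilon_1,\dots,\epsilon_n$ i.i.d. $N(0,1)$. Let $k\in\{2,3\}$ and set $\hat\Sigma_T^{(k)}=\frac1n\sum_{i=1}^n x_{i,T}^{\otimes k}$ and $G^{(k)}=\sum_{i=1}^n\epsilon_i^2x_{i,T}^{\otimes k}$. Then there is a constant $\xi$ depending only on $k$ such that for every $\delta\in(0,1)$, with probability at least $1-\delta$, $$\Lambda_{\max}\Big(\frac1n G^{(k)}-\hat\Sigma_T^{(k)}\Big)\le\frac2n\Big(\sqrt{t\,n\,\Lambda_{\max}(\hat\Sigma_T^{(2k)})\log(\xi/\delta)}+t\max_{i\in[n]}\|x_{i,T}\|^k\log(\xi/\delta)\Big).$$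
   Context: For a symmetric tensor of the form $A=\sum_i c_i a_i^{\otimes k}$ on $\mathbb R^T$ and $z\in\mathbb R^T$, write $A(z)=\sum_i c_i(a_i^\top z)^k$, and $\Lambda_{\max}(A)=\sup_{\|z\|_2=1}A(z)$. In particular $\Lambda_{\max}(\hat\Sigma^{(2k)}_T)=\sup_{\|z\|=1}\frac1n\sum_i(x_{i,T}^\top z)^{2k}$. $x_{i,T}$ is the subvector of $x_i$ indexed by $T$. (In the paper $G^{(k)}$ arises as the $k$-th derivative tensor at $\theta^\star_T$ of the Gaussian negative log-likelihood $\sum_i x_{i,T}^\top\theta+\eta_i^2e^{-x_{i,T}^\top\theta}$ with $\eta_i=e^{x_i^\top\theta^\star/2}\epsilon_i$.) *)

theory Defs
  imports "HOL-Probability.Probability"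
begin

text \<open>Vectors x_i in R^p are represented as x i :: nat => real (coordinates j < p);
  a direction z supported on the coordinate set T is a function nat => real,
  only its values on T matter.\<close>

definition ip_T :: "nat set \<Rightarrow> (nat \<Rightarrow> real) \<Rightarrow> (nat \<Rightarrow> real) \<Rightarrow> real" where
  "ip_T T a z = (\<Sum>j\<in>T. a j * z j)"

definition norm_T :: "nat set \<Rightarrow> (nat \<Rightarrow> real) \<Rightarrow> real" where
  "norm_T T a = sqrt (\<Sum>j\<in>T. (a j)\<^sup>2)"

definition unit_sphere_T :: "nat set \<Rightarrow> (nat \<Rightarrow> real) set" where
  "unit_sphere_T T = {z. norm_T T z = 1}"

text \<open>Lambda_max of a symmetric tensor given through its form A(z), over unit z in R^T.\<close>
definition Lambda_max :: "nat set \<Rightarrow> ((nat \<Rightarrow> real) \<Rightarrow> real) \<Rightarrow> real" where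
  "Lambda_max T A = (SUP z \<in> unit_sphere_T T. A z)"

text \<open>i.i.d. N(0,1) noise epsilon_1..epsilon_n realised canonically: omega i = epsilon_i.\<close>
definition gauss_measure :: "nat \<Rightarrow> (nat \<Rightarrow> real) measure" where
  "gauss_measure n = PiM {..<n} (\<lambda>_. density lborel std_normal_density)"

end

theory Submission
  imports Defs "HOL-Probability.Probability"
begin


lemma gauss_mgf:
  fixes \<theta> :: real
  assumes th: "2 * \<theta> < 1"
  shows "(\<integral>\<^sup>+ x. ennreal (exp (\<theta> * (x\<^sup>2 - 1))) \<partial>density lborel std_normal_density)
     = ennreal (exp (-\<theta>) / sqrt (1 - 2 * \<theta>))"
proof -
  define s where "s = 1 / sqrt (1 - 2 * \<theta>)"
  define c where "c = exp (-\<theta>) / sqrt (1 - 2 * \<theta>)"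
  have sp: "0 < s" using th by (simp add: s_def)
  have cp: "0 \<le> c" using th by (simp add: c_def)
  have s2: "s\<^sup>2 = 1 / (1 - 2 * \<theta>)" using th by (simp add: s_def power_divide)
  have pt: "std_normal_density x * exp (\<theta> * (x\<^sup>2 - 1)) = c * normal_density 0 s x" for x
  proof -
    have q: "sqrt (1 - 2 * \<theta>) > 0" using th by simp
    have "normal_density 0 s x = sqrt (1 - 2 * \<theta>) / sqrt (2 * pi) * exp (- (1 - 2*\<theta>) * x\<^sup>2 / 2)"
      unfolding normal_density_def s2 using th q
      by (simp add: real_sqrt_divide real_sqrt_mult field_simps)
    then have "c * normal_density 0 s x = exp (-\<theta>) / sqrt (2 * pi) * exp (- (1 - 2*\<theta>) * x\<^sup>2 / 2)"
      unfolding c_def using q by (simp add: field_simps)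
    also have "\<dots> = 1 / sqrt (2 * pi) * exp (- x\<^sup>2 / 2) * exp (\<theta> * (x\<^sup>2 - 1))"
    proof -
      have e: "- \<theta> + (- (1 - 2*\<theta>) * x\<^sup>2 / 2) = - x\<^sup>2 / 2 + \<theta> * (x\<^sup>2 - 1)"
        by (simp add: field_simps)
      have "exp (-\<theta>) / sqrt (2 * pi) * exp (- (1 - 2*\<theta>) * x\<^sup>2 / 2)
          = 1 / sqrt (2 * pi) * exp (- \<theta> + (- (1 - 2*\<theta>) * x\<^sup>2 / 2))"
        by (simp only: exp_add) simp
      also have "\<dots> = 1 / sqrt (2 * pi) * exp (- x\<^sup>2 / 2 + \<theta> * (x\<^sup>2 - 1))" by (simp only: e)
      also have "\<dots> = 1 / sqrt (2 * pi) * exp (- x\<^sup>2 / 2) * exp (\<theta> * (x\<^sup>2 - 1))"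
        by (simp only: exp_add)
      finally show ?thesis .
    qed
    finally show ?thesis unfolding std_normal_density_def by simp
  qed
  have "(\<integral>\<^sup>+ x. ennreal (exp (\<theta> * (x\<^sup>2 - 1))) \<partial>density lborel std_normal_density)
      = (\<integral>\<^sup>+ x. ennreal (std_normal_density x) * ennreal (exp (\<theta> * (x\<^sup>2 - 1))) \<partial>lborel)"
    by (subst nn_integral_density) auto
  also have "\<dots> = (\<integral>\<^sup>+ x. ennreal c * ennreal (normal_density 0 s x) \<partial>lborel)"
    by (intro nn_integral_cong) (simp add: ennreal_mult'[symmetric] ennreal_mult''[symmetric] pt cp)
  also have "\<dots> = ennreal c * (\<integral>\<^sup>+ x. ennreal (normal_density 0 s x) \<partial>lborel)"
    by (rule nn_integral_cmult) auto
  also have "(\<integral>\<^sup>+ x. ennreal (normal_density 0 s x) \<partial>lborel) = 1"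
    by (subst nn_integral_eq_integral) (auto simp: integral_normal_density[OF sp] integrable_normal_density[OF sp])
  finally show ?thesis by (simp add: c_def)
qed



lemma aux48: "4 / (4 - 8 * (s::real)) = 2 / (2 - 4 * s)"
proof -
  have e: "4 - 8 * s = 2 * (2 - 4 * s)" by simp
  show ?thesis unfolding e by (cases "2 - 4 * s = 0") (auto simp: divide_simps)
qed

lemma psi_neg:
  fixes \<theta> :: real assumes "\<theta> \<le> 0"
  shows "- \<theta> - ln (1 - 2 * \<theta>) / 2 \<le> \<theta>\<^sup>2"
proof -
  define h where "h = (\<lambda>s::real. s\<^sup>2 + s + ln (1 - 2 * s) / 2)"
  have "h \<theta> \<ge> h 0"
  proof (rule DERIV_nonpos_imp_nonincreasing[OF assms])
    fix s :: real assume s: "\<theta> \<le> s" "s \<le> 0"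
    have d: "DERIV h s :> 2 * s + 1 + (- 2 / (1 - 2 * s)) / 2"
      unfolding h_def using s by (auto intro!: derivative_eq_intros simp: aux48)
    have "2 * s + 1 + (- 2 / (1 - 2 * s)) / 2 = - 4 * s\<^sup>2 / (1 - 2 * s)"
      using s by (simp add: field_simps power2_eq_square)
    also have "\<dots> \<le> 0" using s by (intro divide_nonpos_pos) auto
    finally show "\<exists>y. DERIV h s :> y \<and> y \<le> 0" using d by blast
  qed
  then show ?thesis by (simp add: h_def)
qed

lemma psi_pos:
  fixes \<theta> :: real assumes "0 \<le> \<theta>" "2 * \<theta> < 1"
  shows "- \<theta> - ln (1 - 2 * \<theta>) / 2 \<le> \<theta>\<^sup>2 / (1 - 2 * \<theta>)"
proof -
  define g where "g = (\<lambda>s::real. s\<^sup>2 / (1 - 2 * s) + s + ln (1 - 2 * s) / 2)"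
  have "g 0 \<le> g \<theta>"
  proof (rule DERIV_nonneg_imp_nondecreasing[OF assms(1)])
    fix s :: real assume s: "0 \<le> s" "s \<le> \<theta>"
    then have s1: "1 - 2 * s > 0" using assms by auto
    have d: "DERIV g s :> (2 * s * (1 - 2 * s) - s\<^sup>2 * (- 2)) / (1 - 2 * s)\<^sup>2 + 1 + (- 2 / (1 - 2 * s)) / 2"
      unfolding g_def using s1 by (auto intro!: derivative_eq_intros simp: aux48 power2_eq_square)
    have "(2 * s * (1 - 2 * s) - s\<^sup>2 * (- 2)) / (1 - 2 * s)\<^sup>2 + 1 + (- 2 / (1 - 2 * s)) / 2
        = 2 * s\<^sup>2 / (1 - 2 * s)\<^sup>2"
    proof -
      have q: "(1 - 2 * s)\<^sup>2 \<noteq> 0" "1 - 2 * s \<noteq> 0" using s1 by auto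
      show ?thesis using q by (simp add: divide_simps) (simp add: algebra_simps power2_eq_square)
    qed
    also have "\<dots> \<ge> 0" by simp
    finally show "\<exists>y. DERIV g s :> y \<and> y \<ge> 0" using d by blast
  qed
  then show ?thesis by (simp add: g_def)
qed

lemma mgf_bound:
  fixes \<theta> b :: real assumes "2 * \<bar>\<theta>\<bar> \<le> b" "b < 1"
  shows "exp (-\<theta>) / sqrt (1 - 2 * \<theta>) \<le> exp (\<theta>\<^sup>2 / (1 - b))"
proof -
  have pos: "1 - 2 * \<theta> > 0" using assms by auto
  have "sqrt (1 - 2 * \<theta>) = exp (ln (1 - 2 * \<theta>) / 2)"
    using pos by (simp add: sqrt_def root_powr_inverse powr_def)
  then have e: "exp (-\<theta>) / sqrt (1 - 2 * \<theta>) = exp (- \<theta> - ln (1 - 2 * \<theta>) / 2)"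
    by (simp add: exp_diff)
  have "- \<theta> - ln (1 - 2 * \<theta>) / 2 \<le> \<theta>\<^sup>2 / (1 - b)"
  proof (cases "\<theta> \<le> 0")
    case True
    have "0 \<le> \<theta>\<^sup>2 * b" using assms by (intro mult_nonneg_nonneg) auto
    then have "\<theta>\<^sup>2 \<le> \<theta>\<^sup>2 / (1 - b)"
      using assms by (simp add: le_divide_eq algebra_simps)
    then show ?thesis using psi_neg[OF True] by linarith
  next
    case False
    have "\<theta>\<^sup>2 / (1 - 2 * \<theta>) \<le> \<theta>\<^sup>2 / (1 - b)"
      using assms False by (intro divide_left_mono) auto
    then show ?thesis using psi_pos[of \<theta>] False assms by linarith
  qed
  then show ?thesis unfolding e by simp
qed



lemma D_prob: "prob_space (density lborel std_normal_density)"
  by (rule prob_space_normal_density) simp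

lemma G_prob: "prob_space (gauss_measure n)"
  unfolding gauss_measure_def by (rule prob_space_PiM) (rule D_prob)

lemma comp_meas[measurable]:
  "i \<in> {..<n} \<Longrightarrow> (\<lambda>\<omega>. \<omega> i) \<in> borel_measurable (gauss_measure n)"
  using measurable_component_singleton[of i "{..<n}" "\<lambda>_. density lborel std_normal_density"]
  unfolding gauss_measure_def by (simp cong: measurable_cong_sets)

lemma chernoff:
  fixes a :: "nat \<Rightarrow> real" and lam c x :: real
  assumes l0: "0 \<le> lam" and lc: "2 * lam * c < 1" and ac: "\<And>i. i < n \<Longrightarrow> \<bar>a i\<bar> \<le> c"
  shows "emeasure (gauss_measure n) {\<omega> \<in> space (gauss_measure n). (\<Sum>i<n. a i * ((\<omega> i)\<^sup>2 - 1)) > x}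
     \<le> ennreal (exp (- lam * x + lam\<^sup>2 * (\<Sum>i<n. (a i)\<^sup>2) / (1 - 2 * lam * c)))"
proof -
  define D where "D = density lborel std_normal_density"
  have G: "gauss_measure n = PiM {..<n} (\<lambda>_. D)" unfolding gauss_measure_def D_def ..
  interpret P: product_prob_space "\<lambda>_::nat. D"
    by (rule product_prob_spaceI) (simp add: D_def D_prob)
  define S where "S = {\<omega> \<in> space (gauss_measure n). (\<Sum>i<n. a i * ((\<omega> i)\<^sup>2 - 1)) > x}"
  have Sm: "S \<in> sets (gauss_measure n)" unfolding S_def by measurable
  have "emeasure (gauss_measure n) S = (\<integral>\<^sup>+ \<omega>. indicator S \<omega> \<partial>gauss_measure n)"
    using Sm by simp
  also have "\<dots> \<le> (\<integral>\<^sup>+ \<omega>. ennreal (exp (- lam * x)) * (\<Prod>i<n. ennreal (exp ((lam * a i) * ((\<omega> i)\<^sup>2 - 1)))) \<partial>gauss_measure n)"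
  proof (intro nn_integral_mono)
    fix \<omega> assume "\<omega> \<in> space (gauss_measure n)"
    have e: "ennreal (exp (- lam * x)) * (\<Prod>i<n. ennreal (exp ((lam * a i) * ((\<omega> i)\<^sup>2 - 1))))
        = ennreal (exp (lam * ((\<Sum>i<n. a i * ((\<omega> i)\<^sup>2 - 1)) - x)))"
      by (simp add: prod_ennreal ennreal_mult'[symmetric] exp_sum[symmetric] exp_add[symmetric]
          sum_distrib_left algebra_simps)
    show "indicator S \<omega> \<le> ennreal (exp (- lam * x)) * (\<Prod>i<n. ennreal (exp ((lam * a i) * ((\<omega> i)\<^sup>2 - 1))))"
    proof (cases "\<omega> \<in> S")
      case True
      then have "0 \<le> lam * ((\<Sum>i<n. a i * ((\<omega> i)\<^sup>2 - 1)) - x)"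
        using l0 unfolding S_def by auto
      then have "1 \<le> exp (lam * ((\<Sum>i<n. a i * ((\<omega> i)\<^sup>2 - 1)) - x))" by simp
      then show ?thesis unfolding e using True by simp
    qed simp
  qed
  also have "\<dots> = ennreal (exp (- lam * x)) * (\<integral>\<^sup>+ \<omega>. (\<Prod>i<n. ennreal (exp ((lam * a i) * ((\<omega> i)\<^sup>2 - 1)))) \<partial>gauss_measure n)"
    by (rule nn_integral_cmult) measurable
  also have "(\<integral>\<^sup>+ \<omega>. (\<Prod>i<n. ennreal (exp ((lam * a i) * ((\<omega> i)\<^sup>2 - 1)))) \<partial>gauss_measure n)
      = (\<Prod>i<n. (\<integral>\<^sup>+ y. ennreal (exp ((lam * a i) * (y\<^sup>2 - 1))) \<partial>D))"
    unfolding G by (rule P.product_nn_integral_prod[where f="\<lambda>i y. ennreal (exp ((lam * a i) * (y\<^sup>2 - 1)))"]) (auto simp: D_def)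
  also have "\<dots> = (\<Prod>i<n. ennreal (exp (- (lam * a i)) / sqrt (1 - 2 * (lam * a i))))"
  proof (intro prod.cong refl)
    fix i assume "i \<in> {..<n}"
    then have "\<bar>a i\<bar> \<le> c" using ac by auto
    then have "lam * a i \<le> lam * c" using l0 by (intro mult_left_mono) auto
    then have "2 * (lam * a i) < 1" using lc by linarith
    then show "(\<integral>\<^sup>+ y. ennreal (exp ((lam * a i) * (y\<^sup>2 - 1))) \<partial>D) = ennreal (exp (- (lam * a i)) / sqrt (1 - 2 * (lam * a i)))"
      unfolding D_def by (rule gauss_mgf)
  qed
  also have "\<dots> \<le> (\<Prod>i<n. ennreal (exp ((lam * a i)\<^sup>2 / (1 - 2 * lam * c))))"
  proof (intro prod_mono_ennreal ennreal_leI)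
    fix i assume "i \<in> {..<n}"
    then have "\<bar>a i\<bar> \<le> c" using ac by auto
    then have "lam * \<bar>a i\<bar> \<le> lam * c" using l0 by (intro mult_left_mono) auto
    then have "2 * \<bar>lam * a i\<bar> \<le> 2 * lam * c" using l0 by (simp add: abs_mult)
    then show "exp (- (lam * a i)) / sqrt (1 - 2 * (lam * a i)) \<le> exp ((lam * a i)\<^sup>2 / (1 - 2 * lam * c))"
      using lc by (intro mgf_bound) auto
  qed
  also have "\<dots> = ennreal (exp (\<Sum>i<n. (lam * a i)\<^sup>2 / (1 - 2 * lam * c)))"
    by (simp add: prod_ennreal exp_sum)
  finally have "emeasure (gauss_measure n) S \<le> ennreal (exp (- lam * x)) * ennreal (exp (\<Sum>i<n. (lam * a i)\<^sup>2 / (1 - 2 * lam * c)))"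
    by (simp add: mult_left_mono)
  also have "\<dots> = ennreal (exp (- lam * x + lam\<^sup>2 * (\<Sum>i<n. (a i)\<^sup>2) / (1 - 2 * lam * c)))"
    by (simp add: ennreal_mult'[symmetric] exp_add[symmetric] sum_divide_distrib[symmetric]
        sum_distrib_left power_mult_distrib)
  finally show ?thesis unfolding S_def .
qed



lemma alg_tail:
  fixes q r c d :: real
  assumes d: "d = q + 2 * c * r" "0 < d" "0 < q"
  shows "- (r / d) * (2 * q * r + 2 * c * r\<^sup>2) + (r / d)\<^sup>2 * q\<^sup>2 / (q / d) = - r\<^sup>2"
proof -
  have "(r / d)\<^sup>2 * q\<^sup>2 / (q / d) = r\<^sup>2 * q / d"
    using d(2,3) by (simp add: field_simps power2_eq_square)
  moreover have "- (r / d) * (2 * q * r + 2 * c * r\<^sup>2) = - r\<^sup>2 * (2 * q + 2 * c * r) / d"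
    using d(2,3) by (simp add: field_simps power2_eq_square)
  moreover have "r\<^sup>2 * q / d + - r\<^sup>2 * (2 * q + 2 * c * r) / d = - r\<^sup>2 * (q + 2 * c * r) / d"
    by (simp add: add_divide_distrib[symmetric] algebra_simps power2_eq_square)
  ultimately show ?thesis using d by simp
qed

lemma tail:
  fixes a :: "nat \<Rightarrow> real" and V c u :: real
  assumes aV: "(\<Sum>i<n. (a i)\<^sup>2) \<le> V" and ac: "\<And>i. i < n \<Longrightarrow> \<bar>a i\<bar> \<le> c"
    and c0: "0 \<le> c" and u0: "0 < u"
  shows "measure (gauss_measure n) {\<omega> \<in> space (gauss_measure n).
            (\<Sum>i<n. a i * ((\<omega> i)\<^sup>2 - 1)) > 2 * sqrt (V * u) + 2 * c * u} \<le> exp (- u)"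
proof -
  interpret G: prob_space "gauss_measure n" by (rule G_prob)
  let ?x = "2 * sqrt (V * u) + 2 * c * u"
  let ?S = "{\<omega> \<in> space (gauss_measure n). (\<Sum>i<n. a i * ((\<omega> i)\<^sup>2 - 1)) > ?x}"
  have s0: "0 \<le> (\<Sum>i<n. (a i)\<^sup>2)" by (intro sum_nonneg) auto
  show ?thesis
  proof (cases "V \<le> 0")
    case True
    then have "(\<Sum>i<n. (a i)\<^sup>2) = 0" using aV s0 by linarith
    then have "\<forall>i\<in>{..<n}. (a i)\<^sup>2 = 0" by (subst sum_nonneg_eq_0_iff[symmetric]) auto
    then have "\<And>i. i < n \<Longrightarrow> a i = 0" by auto
    then have "(\<Sum>i<n. a i * ((\<omega> i)\<^sup>2 - 1)) = 0" for \<omega> by simp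
    moreover have "0 \<le> ?x" using c0 u0 True aV s0 by auto
    ultimately have "?S = {}" by auto
    then show ?thesis by (simp only:) simp
  next
    case False
    define q where "q = sqrt V"
    define r where "r = sqrt u"
    have q0: "0 < q" using False by (simp add: q_def)
    have r0: "0 < r" using u0 by (simp add: r_def)
    have Vq: "V = q\<^sup>2" using False by (simp add: q_def)
    have ur: "u = r\<^sup>2" using u0 by (simp add: r_def)
    define lam where "lam = r / (q + 2 * c * r)"
    have Dp: "0 < q + 2 * c * r" using q0 r0 c0 by (simp add: add_pos_nonneg)
    have l0: "0 \<le> lam" using Dp r0 by (simp add: lam_def)
    have one: "1 - 2 * lam * c = q / (q + 2 * c * r)" using Dp by (simp add: lam_def field_simps)
    have "q / (q + 2 * c * r) > 0" using q0 Dp by simp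
    then have lc: "2 * lam * c < 1" using one by linarith
    have xq: "?x = 2 * q * r + 2 * c * r\<^sup>2"
      using Vq ur q0 r0 by (simp add: real_sqrt_mult)
    have "emeasure (gauss_measure n) ?S \<le> ennreal (exp (- lam * ?x + lam\<^sup>2 * (\<Sum>i<n. (a i)\<^sup>2) / (1 - 2 * lam * c)))"
      by (rule chernoff[OF l0 lc ac])
    also have "\<dots> \<le> ennreal (exp (- lam * ?x + lam\<^sup>2 * V / (1 - 2 * lam * c)))"
      using aV lc by (auto intro!: divide_right_mono mult_left_mono)
    also have "- lam * ?x + lam\<^sup>2 * V / (1 - 2 * lam * c)
        = - lam * (2 * q * r + 2 * c * r\<^sup>2) + lam\<^sup>2 * q\<^sup>2 / (q / (q + 2 * c * r))"
      by (simp only: xq one flip: Vq)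
    also have "\<dots> = - r\<^sup>2"
      unfolding lam_def using Dp q0 by (intro alg_tail) auto
    also have "\<dots> = - u" by (simp add: ur)
    finally have "ennreal (measure (gauss_measure n) ?S) \<le> ennreal (exp (- u))"
      by (simp add: G.emeasure_eq_measure)
    then show ?thesis by simp
  qed
qed



lemma nT_L2: "norm_T T a = L2_set a T"
  unfolding norm_T_def L2_set_def ..

lemma nT_nonneg[simp]: "0 \<le> norm_T T a"
  by (simp add: nT_L2)

lemma nT_scale: "norm_T T (\<lambda>j. c * u j) = \<bar>c\<bar> * norm_T T u"
proof -
  have "norm_T T (\<lambda>j. c * u j) = L2_set (\<lambda>j. \<bar>c\<bar> * u j) T"
    unfolding nT_L2 L2_set_def by (simp add: power_mult_distrib)
  also have "\<dots> = \<bar>c\<bar> * norm_T T u"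
    unfolding nT_L2 by (rule L2_set_right_distrib[symmetric]) simp
  finally show ?thesis .
qed

lemma nT_tri: "norm_T T (\<lambda>j. u j + v j) \<le> norm_T T u + norm_T T v"
  unfolding nT_L2 by (rule L2_set_triangle_ineq)

lemma nT_neg: "norm_T T (\<lambda>j. - u j) = norm_T T u"
  unfolding norm_T_def by simp

lemma nT_comb: "norm_T T (\<lambda>j. a * u j + b * v j) \<le> \<bar>a\<bar> * norm_T T u + \<bar>b\<bar> * norm_T T v"
  using nT_tri[of T "\<lambda>j. a * u j" "\<lambda>j. b * v j"] by (simp add: nT_scale)

lemma nT_comb3: "norm_T T (\<lambda>j. a * u j + b * v j + c * w j)
   \<le> \<bar>a\<bar> * norm_T T u + \<bar>b\<bar> * norm_T T v + \<bar>c\<bar> * norm_T T w"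
  using nT_tri[of T "\<lambda>j. a * u j + b * v j" "\<lambda>j. c * w j"] nT_comb[of T a u b v]
  by (simp add: nT_scale)

lemma ip_CS: "\<bar>ip_T T a z\<bar> \<le> norm_T T a * norm_T T z"
proof -
  have "\<bar>ip_T T a z\<bar> \<le> (\<Sum>j\<in>T. \<bar>a j\<bar> * \<bar>z j\<bar>)"
    unfolding ip_T_def by (rule order_trans[OF sum_abs]) (simp add: abs_mult)
  also have "\<dots> \<le> norm_T T a * norm_T T z" unfolding nT_L2 by (rule L2_set_mult_ineq)
  finally show ?thesis .
qed

lemma ip_comb: "ip_T T a (\<lambda>j. \<alpha> * u j + \<beta> * v j) = \<alpha> * ip_T T a u + \<beta> * ip_T T a v"
  unfolding ip_T_def by (simp add: sum.distrib sum_distrib_left algebra_simps)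

lemma ip_comb3: "ip_T T a (\<lambda>j. \<alpha> * u j + \<beta> * v j + \<gamma> * w j)
   = \<alpha> * ip_T T a u + \<beta> * ip_T T a v + \<gamma> * ip_T T a w"
  unfolding ip_T_def by (simp add: sum.distrib sum_distrib_left algebra_simps)

lemma ip_local: "(\<And>j. j \<in> T \<Longrightarrow> u j = v j) \<Longrightarrow> ip_T T a u = ip_T T a v"
  unfolding ip_T_def by (intro sum.cong) auto

lemma nT_zero: "finite T \<Longrightarrow> norm_T T u = 0 \<Longrightarrow> ip_T T a u = 0"
  unfolding nT_L2 ip_T_def by (simp add: L2_set_eq_0_iff)

definition Af :: "nat \<Rightarrow> (nat \<Rightarrow> real) \<Rightarrow> (nat \<Rightarrow> nat \<Rightarrow> real) \<Rightarrow> nat \<Rightarrow> nat set \<Rightarrow> (nat \<Rightarrow> real) \<Rightarrow> real" where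
  "Af n w x k T u = (\<Sum>i<n. w i * (ip_T T (x i) u) ^ k)"

lemma Af_bdd:
  assumes "z \<in> unit_sphere_T T"
  shows "\<bar>Af n w x k T z\<bar> \<le> (\<Sum>i<n. \<bar>w i\<bar> * (norm_T T (x i)) ^ k)"
proof -
  have "\<bar>Af n w x k T z\<bar> \<le> (\<Sum>i<n. \<bar>w i * (ip_T T (x i) z) ^ k\<bar>)"
    unfolding Af_def by (rule sum_abs)
  also have "\<dots> \<le> (\<Sum>i<n. \<bar>w i\<bar> * (norm_T T (x i)) ^ k)"
  proof (intro sum_mono)
    fix i
    have "\<bar>ip_T T (x i) z\<bar> \<le> norm_T T (x i)"
      using ip_CS[of T "x i" z] assms by (simp add: unit_sphere_T_def)
    then have "\<bar>ip_T T (x i) z\<bar> ^ k \<le> (norm_T T (x i)) ^ k" by (rule power_mono) simp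
    then show "\<bar>w i * (ip_T T (x i) z) ^ k\<bar> \<le> \<bar>w i\<bar> * (norm_T T (x i)) ^ k"
      by (simp add: abs_mult power_abs mult_left_mono)
  qed
  finally show ?thesis .
qed

lemma Af_bdd_above: "bdd_above ((\<lambda>z. \<bar>Af n w x k T z\<bar>) ` unit_sphere_T T)"
  using Af_bdd by (intro bdd_aboveI2) blast

lemma sphere_ne:
  assumes "finite T" "j0 \<in> T"
  shows "(\<lambda>j. if j = j0 then 1 else 0) \<in> unit_sphere_T T"
proof -
  have "(\<Sum>j\<in>T. ((\<lambda>j. if j = j0 then 1 else 0 :: real) j)\<^sup>2) = (\<Sum>j\<in>T. if j = j0 then 1 else 0)"
    by (intro sum.cong) auto
  also have "\<dots> = 1" using assms by simp
  finally show ?thesis unfolding unit_sphere_T_def norm_T_def by simp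
qed

lemma sphere_nonempty: "finite T \<Longrightarrow> T \<noteq> {} \<Longrightarrow> unit_sphere_T T \<noteq> {}"
  using sphere_ne by blast

lemma SUP_abs_nonneg:
  assumes "finite T" "T \<noteq> {}"
  shows "0 \<le> (SUP z \<in> unit_sphere_T T. \<bar>Af n w x k T z\<bar>)"
proof -
  obtain z where "z \<in> unit_sphere_T T" using sphere_nonempty[OF assms] by blast
  then have "\<bar>Af n w x k T z\<bar> \<le> (SUP z \<in> unit_sphere_T T. \<bar>Af n w x k T z\<bar>)"
    by (intro cSUP_upper Af_bdd_above)
  then show ?thesis by linarith
qed

lemma Af_homog:
  assumes T: "finite T" "T \<noteq> {}" and k: "0 < k"
  shows "\<bar>Af n w x k T u\<bar> \<le> (SUP z \<in> unit_sphere_T T. \<bar>Af n w x k T z\<bar>) * (norm_T T u) ^ k"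
proof (cases "norm_T T u = 0")
  case True
  then have "Af n w x k T u = 0" unfolding Af_def using nT_zero[OF T(1) True] k by (simp add: power_0_left)
  moreover have "0 \<le> (SUP z \<in> unit_sphere_T T. \<bar>Af n w x k T z\<bar>)" by (rule SUP_abs_nonneg[OF T])
  ultimately show ?thesis by simp
next
  case False
  define N where "N = norm_T T u"
  have N0: "0 < N" using False by (simp add: N_def order_less_le)
  define v where "v = (\<lambda>j. u j / N)"
  have vS: "v \<in> unit_sphere_T T"
    using nT_scale[of T "1 / N" u] N0 unfolding unit_sphere_T_def v_def N_def by simp
  have ipv: "ip_T T a u = N * ip_T T a v" for a
    unfolding ip_T_def v_def using N0 by (simp add: sum_distrib_left)
  have "Af n w x k T u = N ^ k * Af n w x k T v"
    unfolding Af_def ipv by (simp add: sum_distrib_left power_mult_distrib algebra_simps)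
  then have "\<bar>Af n w x k T u\<bar> = N ^ k * \<bar>Af n w x k T v\<bar>" using N0 by (simp add: abs_mult)
  also have "\<dots> \<le> N ^ k * (SUP z \<in> unit_sphere_T T. \<bar>Af n w x k T z\<bar>)"
    using N0 by (intro mult_left_mono cSUP_upper[OF vS Af_bdd_above]) auto
  finally show ?thesis by (simp add: N_def mult.commute)
qed



lemma ip_scale: "ip_T T a (\<lambda>j. c * u j) = c * ip_T T a u"
  unfolding ip_T_def by (simp add: sum_distrib_left algebra_simps)

lemma ip_diff: "ip_T T a (\<lambda>j. u j - v j) = ip_T T a u - ip_T T a v"
  unfolding ip_T_def by (simp add: sum_subtractf algebra_simps)

lemma Af_ball:
  assumes T: "finite T" "T \<noteq> {}" and k: "0 < k" and u: "norm_T T u \<le> \<rho>"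
  shows "\<bar>Af n w x k T u\<bar> \<le> (SUP z \<in> unit_sphere_T T. \<bar>Af n w x k T z\<bar>) * \<rho> ^ k"
proof -
  have "\<bar>Af n w x k T u\<bar> \<le> (SUP z \<in> unit_sphere_T T. \<bar>Af n w x k T z\<bar>) * (norm_T T u) ^ k"
    by (rule Af_homog[OF T k])
  also have "\<dots> \<le> (SUP z \<in> unit_sphere_T T. \<bar>Af n w x k T z\<bar>) * \<rho> ^ k"
    using u by (intro mult_left_mono power_mono SUP_abs_nonneg[OF T]) auto
  finally show ?thesis .
qed

lemma approx2:
  assumes T: "finite T" "T \<noteq> {}" and zS: "z \<in> unit_sphere_T T" and yS: "y \<in> unit_sphere_T T"
    and eta: "0 < \<eta>" "\<eta> \<le> 1" and d: "norm_T T (\<lambda>j. z j - y j) \<le> \<eta> ^ 3"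
  shows "\<bar>Af n w x 2 T z - Af n w x 2 T y\<bar> \<le> 5 * \<eta>\<^sup>2 * (SUP z \<in> unit_sphere_T T. \<bar>Af n w x 2 T z\<bar>)"
proof -
  define F where "F = (SUP z \<in> unit_sphere_T T. \<bar>Af n w x 2 T z\<bar>)"
  define d where "d = (\<lambda>j. z j - y j)"
  define p where "p = (\<lambda>j. (1 / \<eta>) * d j + \<eta> * z j + \<eta> * y j)"
  define m where "m = (\<lambda>j. (1 / \<eta>) * d j + (- \<eta>) * z j + (- \<eta>) * y j)"
  have nz: "norm_T T z = 1" and ny: "norm_T T y = 1" using zS yS by (auto simp: unit_sphere_T_def)
  have nd: "(1 / \<eta>) * norm_T T d \<le> \<eta>\<^sup>2"
  proof -
    have "(1 / \<eta>) * norm_T T d \<le> (1 / \<eta>) * \<eta> ^ 3" using d eta unfolding d_def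
      by (intro mult_left_mono) auto
    also have "\<dots> = \<eta>\<^sup>2" using eta by (simp add: power3_eq_cube power2_eq_square)
    finally show ?thesis .
  qed
  have e2: "\<eta>\<^sup>2 \<le> \<eta>" using eta by (simp add: power2_eq_square mult_left_le_one_le)
  have np: "norm_T T p \<le> 3 * \<eta>"
    using nT_comb3[of T "1/\<eta>" d \<eta> z \<eta> y] nz ny nd e2 eta unfolding p_def by simp
  have nm: "norm_T T m \<le> 3 * \<eta>"
    using nT_comb3[of T "1/\<eta>" d "-\<eta>" z "-\<eta>" y] nz ny nd e2 eta unfolding m_def by simp
  have Fp: "\<bar>Af n w x 2 T p\<bar> \<le> F * (3 * \<eta>)^2" unfolding F_def by (rule Af_ball[OF T _ np]) simp
  have Fm: "\<bar>Af n w x 2 T m\<bar> \<le> F * (3 * \<eta>)^2" unfolding F_def by (rule Af_ball[OF T _ nm]) simp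
  have key: "Af n w x 2 T p - Af n w x 2 T m = 4 * (Af n w x 2 T z - Af n w x 2 T y)"
  proof -
    have pi: "(ip_T T (x i) p)\<^sup>2 - (ip_T T (x i) m)\<^sup>2 = 4 * ((ip_T T (x i) z)\<^sup>2 - (ip_T T (x i) y)\<^sup>2)" for i
      unfolding p_def m_def ip_comb3 d_def ip_diff using eta
      by (simp add: power2_eq_square field_simps)
    have "Af n w x 2 T p - Af n w x 2 T m = (\<Sum>i<n. w i * ((ip_T T (x i) p)\<^sup>2 - (ip_T T (x i) m)\<^sup>2))"
      unfolding Af_def by (simp add: sum_subtractf[symmetric] right_diff_distrib)
    also have "\<dots> = (\<Sum>i<n. 4 * (w i * ((ip_T T (x i) z)\<^sup>2 - (ip_T T (x i) y)\<^sup>2)))"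
      unfolding pi by (simp add: algebra_simps)
    also have "\<dots> = 4 * (Af n w x 2 T z - Af n w x 2 T y)"
      by (simp only: Af_def sum_distrib_left[symmetric]) (simp add: sum_subtractf right_diff_distrib)
    finally show ?thesis .
  qed
  have "4 * \<bar>Af n w x 2 T z - Af n w x 2 T y\<bar> \<le> \<bar>Af n w x 2 T p\<bar> + \<bar>Af n w x 2 T m\<bar>"
  proof -
    have "4 * \<bar>Af n w x 2 T z - Af n w x 2 T y\<bar> = \<bar>Af n w x 2 T p - Af n w x 2 T m\<bar>"
      by (simp only: key abs_mult)
    then show ?thesis using abs_triangle_ineq4[of "Af n w x 2 T p" "Af n w x 2 T m"] by linarith
  qed
  also have "\<dots> \<le> 18 * \<eta>\<^sup>2 * F" using Fp Fm by (simp add: power2_eq_square algebra_simps)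
  finally have "\<bar>Af n w x 2 T z - Af n w x 2 T y\<bar> \<le> 18 / 4 * \<eta>\<^sup>2 * F" by (simp add: algebra_simps)
  also have "\<dots> \<le> 5 * \<eta>\<^sup>2 * F"
    using SUP_abs_nonneg[OF T] unfolding F_def by (intro mult_right_mono) auto
  finally show ?thesis unfolding F_def .
qed

lemma tri_bound:
  assumes T: "finite T" "T \<noteq> {}"
    and na: "norm_T T a \<le> \<rho>" and nb: "norm_T T b \<le> \<rho>" and nc: "norm_T T c \<le> \<rho>"
  shows "\<bar>\<Sum>i<n. w i * (ip_T T (x i) a * ip_T T (x i) b * ip_T T (x i) c)\<bar>
     \<le> 9 / 2 * (SUP z \<in> unit_sphere_T T. \<bar>Af n w x 3 T z\<bar>) * \<rho> ^ 3"
proof -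
  define F where "F = (SUP z \<in> unit_sphere_T T. \<bar>Af n w x 3 T z\<bar>)"
  have F0: "0 \<le> F" unfolding F_def by (rule SUP_abs_nonneg[OF T])
  define s where "s = (\<lambda>(\<beta>::real) (\<gamma>::real) j. 1 * a j + \<beta> * b j + \<gamma> * c j)"
  have ns: "\<bar>\<beta>\<bar> = 1 \<Longrightarrow> \<bar>\<gamma>\<bar> = 1 \<Longrightarrow> norm_T T (s \<beta> \<gamma>) \<le> 3 * \<rho>" for \<beta> \<gamma>
    using nT_comb3[of T 1 a \<beta> b \<gamma> c] na nb nc unfolding s_def by simp
  have Fs: "\<bar>\<beta>\<bar> = 1 \<Longrightarrow> \<bar>\<gamma>\<bar> = 1 \<Longrightarrow> \<bar>Af n w x 3 T (s \<beta> \<gamma>)\<bar> \<le> F * (3 * \<rho>) ^ 3" for \<beta> \<gamma>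
    unfolding F_def by (rule Af_ball[OF T _ ns]) auto
  have pol: "(ip_T T (x i) (s 1 1)) ^ 3 - (ip_T T (x i) (s 1 (-1))) ^ 3 - (ip_T T (x i) (s (-1) 1)) ^ 3
      + (ip_T T (x i) (s (-1) (-1))) ^ 3 = 24 * (ip_T T (x i) a * ip_T T (x i) b * ip_T T (x i) c)" for i
    unfolding s_def ip_comb3 by (simp add: power3_eq_cube algebra_simps)
  have "Af n w x 3 T (s 1 1) - Af n w x 3 T (s 1 (-1)) - Af n w x 3 T (s (-1) 1) + Af n w x 3 T (s (-1) (-1))
     = (\<Sum>i<n. w i * ((ip_T T (x i) (s 1 1)) ^ 3 - (ip_T T (x i) (s 1 (-1))) ^ 3 - (ip_T T (x i) (s (-1) 1)) ^ 3
      + (ip_T T (x i) (s (-1) (-1))) ^ 3))"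
    unfolding Af_def by (simp add: sum.distrib sum_subtractf algebra_simps)
  also have "\<dots> = 24 * (\<Sum>i<n. w i * (ip_T T (x i) a * ip_T T (x i) b * ip_T T (x i) c))"
    unfolding pol by (simp add: sum_distrib_left algebra_simps)
  finally have key: "24 * (\<Sum>i<n. w i * (ip_T T (x i) a * ip_T T (x i) b * ip_T T (x i) c)) =
     Af n w x 3 T (s 1 1) - Af n w x 3 T (s 1 (-1)) - Af n w x 3 T (s (-1) 1) + Af n w x 3 T (s (-1) (-1))" ..
  have "24 * \<bar>\<Sum>i<n. w i * (ip_T T (x i) a * ip_T T (x i) b * ip_T T (x i) c)\<bar>
      = \<bar>Af n w x 3 T (s 1 1) - Af n w x 3 T (s 1 (-1)) - Af n w x 3 T (s (-1) 1) + Af n w x 3 T (s (-1) (-1))\<bar>"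
    by (simp only: key[symmetric] abs_mult)
  also have "\<dots> \<le> 4 * (F * (3 * \<rho>) ^ 3)"
    using Fs[of 1 1] Fs[of 1 "-1"] Fs[of "-1" 1] Fs[of "-1" "-1"] by simp
  finally show ?thesis unfolding F_def by (simp add: power3_eq_cube algebra_simps)
qed

lemma approx3:
  assumes T: "finite T" "T \<noteq> {}" and zS: "z \<in> unit_sphere_T T" and yS: "y \<in> unit_sphere_T T"
    and eta: "0 < \<eta>" "\<eta> \<le> 1" and d: "norm_T T (\<lambda>j. z j - y j) \<le> \<eta> ^ 3"
  shows "\<bar>Af n w x 3 T z - Af n w x 3 T y\<bar> \<le> 14 * \<eta> ^ 3 * (SUP z \<in> unit_sphere_T T. \<bar>Af n w x 3 T z\<bar>)"
proof -
  define F where "F = (SUP z \<in> unit_sphere_T T. \<bar>Af n w x 3 T z\<bar>)"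
  have F0: "0 \<le> F" unfolding F_def by (rule SUP_abs_nonneg[OF T])
  define a where "a = (\<lambda>j. (1 / \<eta>\<^sup>2) * (z j - y j))"
  define bz where "bz = (\<lambda>j. \<eta> * z j)"
  define by' where "by' = (\<lambda>j. \<eta> * y j)"
  have nz: "norm_T T z = 1" and ny: "norm_T T y = 1" using zS yS by (auto simp: unit_sphere_T_def)
  have na: "norm_T T a \<le> \<eta>"
  proof -
    have "norm_T T a = (1 / \<eta>\<^sup>2) * norm_T T (\<lambda>j. z j - y j)" unfolding a_def nT_scale by simp
    also have "\<dots> \<le> (1 / \<eta>\<^sup>2) * \<eta> ^ 3" using d eta by (intro mult_left_mono) auto
    also have "\<dots> = \<eta>" using eta by (simp add: power3_eq_cube power2_eq_square)
    finally show ?thesis .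
  qed
  have nbz: "norm_T T bz \<le> \<eta>" unfolding bz_def nT_scale using nz eta by simp
  have nby: "norm_T T by' \<le> \<eta>" unfolding by'_def nT_scale using ny eta by simp
  have per: "w i * (ip_T T (x i) z) ^ 3 - w i * (ip_T T (x i) y) ^ 3
      = w i * (ip_T T (x i) a * ip_T T (x i) bz * ip_T T (x i) bz)
      + w i * (ip_T T (x i) a * ip_T T (x i) bz * ip_T T (x i) by')
      + w i * (ip_T T (x i) a * ip_T T (x i) by' * ip_T T (x i) by')" for i
    unfolding a_def bz_def by'_def ip_scale ip_diff using eta
    by (simp add: power3_eq_cube power2_eq_square field_simps)
  have "Af n w x 3 T z - Af n w x 3 T y
      = (\<Sum>i<n. w i * (ip_T T (x i) a * ip_T T (x i) bz * ip_T T (x i) bz))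
      + (\<Sum>i<n. w i * (ip_T T (x i) a * ip_T T (x i) bz * ip_T T (x i) by'))
      + (\<Sum>i<n. w i * (ip_T T (x i) a * ip_T T (x i) by' * ip_T T (x i) by'))"
    unfolding Af_def sum_subtractf[symmetric] per by (simp add: sum.distrib)
  also have "\<bar>\<dots>\<bar> \<le> 3 * (9 / 2 * F * \<eta> ^ 3)"
    using tri_bound[OF T na nbz nbz, where n=n and w=w and x=x] tri_bound[OF T na nbz nby, where n=n and w=w and x=x]
      tri_bound[OF T na nby nby, where n=n and w=w and x=x] unfolding F_def by linarith
  also have "\<dots> \<le> 14 * \<eta> ^ 3 * F" using F0 eta by simp
  finally show ?thesis unfolding F_def .
qed



lemma natSuc: "nat (int R + 1) = Suc R" "nat (1 + int R) = Suc R" by auto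

lemma geo_int: "(\<Sum>r\<in>{- int R..int R}. (1/2::real) ^ nat \<bar>r\<bar>) \<le> 3 - 2 * (1/2) ^ R"
proof (induction R)
  case 0
  then show ?case by simp
next
  case (Suc R)
  have e: "{- int (Suc R)..int (Suc R)} = insert (- int (Suc R)) (insert (int (Suc R)) {- int R..int R})"
    by auto
  have "(\<Sum>r\<in>{- int (Suc R)..int (Suc R)}. (1/2::real) ^ nat \<bar>r\<bar>)
      = (1/2) ^ Suc R + ((1/2) ^ Suc R + (\<Sum>r\<in>{- int R..int R}. (1/2::real) ^ nat \<bar>r\<bar>))"
    unfolding e by (subst sum.insert; simp add: natSuc)+
  also have "\<dots> \<le> 3 - 2 * (1/2) ^ Suc R" using Suc by (simp add: nat_plus_as_int)
  finally show ?case .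
qed

lemma geo_int3: "(\<Sum>r\<in>{- int R..int R}. (1/2::real) ^ nat \<bar>r\<bar>) \<le> 3"
  using geo_int[of R] zero_le_power[of "1/2::real" R] by linarith

lemma card_grid:
  assumes T: "finite T"
  shows "real (card {m \<in> PiE T (\<lambda>_. {- int R..int R}). (\<Sum>j\<in>T. \<bar>m j\<bar>) \<le> int R}) \<le> 2 ^ R * 3 ^ card T"
proof -
  let ?P = "PiE T (\<lambda>_. {- int R..int R})"
  let ?M = "{m \<in> ?P. (\<Sum>j\<in>T. \<bar>m j\<bar>) \<le> int R}"
  have fP: "finite ?P" using T by (intro finite_PiE) auto
  have "real (card ?M) = (\<Sum>m\<in>?M. 1)" by simp
  also have "\<dots> \<le> (\<Sum>m\<in>?M. 2 ^ R * (\<Prod>j\<in>T. (1/2::real) ^ nat \<bar>m j\<bar>))"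
  proof (intro sum_mono)
    fix m assume m: "m \<in> ?M"
    have "(\<Prod>j\<in>T. (1/2::real) ^ nat \<bar>m j\<bar>) = (1/2) ^ (\<Sum>j\<in>T. nat \<bar>m j\<bar>)"
      by (simp add: power_sum)
    moreover have "(\<Sum>j\<in>T. nat \<bar>m j\<bar>) \<le> R"
    proof -
      have "int (\<Sum>j\<in>T. nat \<bar>m j\<bar>) = (\<Sum>j\<in>T. \<bar>m j\<bar>)" by simp
      also have "\<dots> \<le> int R" using m by auto
      finally have "int (\<Sum>j\<in>T. nat \<bar>m j\<bar>) \<le> int R" .
      then show ?thesis by (simp only: of_nat_le_iff)
    qed
    ultimately have "(1/2) ^ R \<le> (\<Prod>j\<in>T. (1/2::real) ^ nat \<bar>m j\<bar>)"
      by (simp add: power_decreasing)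
    then have "2 ^ R * (1/2) ^ R \<le> 2 ^ R * (\<Prod>j\<in>T. (1/2::real) ^ nat \<bar>m j\<bar>)"
      by (intro mult_left_mono) auto
    then show "1 \<le> 2 ^ R * (\<Prod>j\<in>T. (1/2::real) ^ nat \<bar>m j\<bar>)"
      by (simp add: power_mult_distrib[symmetric])
  qed
  also have "\<dots> \<le> (\<Sum>m\<in>?P. 2 ^ R * (\<Prod>j\<in>T. (1/2::real) ^ nat \<bar>m j\<bar>))"
    using fP by (intro sum_mono2) (auto intro!: mult_nonneg_nonneg prod_nonneg)
  also have "\<dots> = 2 ^ R * (\<Prod>j\<in>T. \<Sum>r\<in>{- int R..int R}. (1/2::real) ^ nat \<bar>r\<bar>)"
    using T prod_sum_PiE[OF T, of "\<lambda>_. {- int R..int R}" "\<lambda>j r. (1/2::real) ^ nat \<bar>r\<bar>"]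
    by (simp only: sum_distrib_left[symmetric]) simp
  also have "\<dots> \<le> 2 ^ R * (\<Prod>j\<in>T. 3)"
    by (intro mult_left_mono prod_mono) (auto intro: sum_nonneg geo_int3)
  finally show ?thesis by simp
qed



lemma nT_swap: "norm_T T (\<lambda>j. u j - v j) = norm_T T (\<lambda>j. v j - u j)"
  unfolding norm_T_def by (simp add: power2_commute)

lemma nT_sub_tri: "norm_T T (\<lambda>j. u j - w j) \<le> norm_T T (\<lambda>j. u j - v j) + norm_T T (\<lambda>j. v j - w j)"
  using nT_tri[of T "\<lambda>j. u j - v j" "\<lambda>j. v j - w j"] by simp

lemma nrm_sphere:
  assumes "norm_T T v \<noteq> 0"
  shows "(\<lambda>j. v j / norm_T T v) \<in> unit_sphere_T T"
proof -
  have "norm_T T (\<lambda>j. (1 / norm_T T v) * v j) = 1"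
    unfolding nT_scale using assms by simp
  then show ?thesis unfolding unit_sphere_T_def by simp
qed

lemma round_toward_zero:
  fixes a h :: real assumes h: "0 < h"
  defines "m \<equiv> (if 0 \<le> a then \<lfloor>a / h\<rfloor> else \<lceil>a / h\<rceil>)"
  shows "\<bar>real_of_int m\<bar> \<le> \<bar>a\<bar> / h" "\<bar>a - h * real_of_int m\<bar> \<le> h"
proof -
  have "\<bar>real_of_int m\<bar> \<le> \<bar>a\<bar> / h \<and> \<bar>a - h * real_of_int m\<bar> \<le> h"
  proof (cases "0 \<le> a")
    case True
    then have m: "m = \<lfloor>a / h\<rfloor>" unfolding m_def by simp
    have f1: "real_of_int \<lfloor>a / h\<rfloor> \<le> a / h" by (rule of_int_floor_le)
    have f2: "a / h - 1 < real_of_int \<lfloor>a / h\<rfloor>" by (rule real_of_int_floor_gt_diff_one)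
    have f0: "0 \<le> \<lfloor>a / h\<rfloor>" using True h by simp
    have e: "a - h * real_of_int \<lfloor>a / h\<rfloor> = h * (a / h - real_of_int \<lfloor>a / h\<rfloor>)"
      using h by (simp add: algebra_simps)
    have "0 \<le> h * (a / h - real_of_int \<lfloor>a / h\<rfloor>)" using f1 h by simp
    moreover have "h * (a / h - real_of_int \<lfloor>a / h\<rfloor>) \<le> h * 1" using f2 h by (intro mult_left_mono) linarith+
    ultimately show ?thesis unfolding m e using f0 f1 True by simp
  next
    case False
    then have m: "m = \<lceil>a / h\<rceil>" unfolding m_def by simp
    have c1: "a / h \<le> real_of_int \<lceil>a / h\<rceil>" by (rule le_of_int_ceiling)
    have c2: "real_of_int \<lceil>a / h\<rceil> < a / h + 1" using ceiling_correct[of "a/h"] by linarith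
    have c0: "\<lceil>a / h\<rceil> \<le> 0" using False h by (simp add: divide_nonpos_pos)
    have e: "a - h * real_of_int \<lceil>a / h\<rceil> = h * (a / h - real_of_int \<lceil>a / h\<rceil>)"
      using h by (simp add: algebra_simps)
    have "h * (a / h - real_of_int \<lceil>a / h\<rceil>) \<le> 0" using c1 h by (simp add: mult_nonneg_nonpos)
    moreover have "h * (-1) \<le> h * (a / h - real_of_int \<lceil>a / h\<rceil>)" using c2 h by (intro mult_left_mono) auto
    moreover have "\<bar>real_of_int \<lceil>a / h\<rceil>\<bar> \<le> \<bar>a\<bar> / h" using c0 c1 False h by auto
    ultimately show ?thesis unfolding m e by simp
  qed
  then show "\<bar>real_of_int m\<bar> \<le> \<bar>a\<bar> / h" "\<bar>a - h * real_of_int m\<bar> \<le> h" by auto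
qed

lemma abs_aux: "0 < (G::real) \<Longrightarrow> \<bar>1 - 1 / G\<bar> * G = \<bar>G - 1\<bar>"
proof -
  assume G: "0 < G"
  have "(1 - 1 / G) * G = G - 1" using G by (simp add: field_simps)
  then have "\<bar>(1 - 1 / G) * G\<bar> = \<bar>G - 1\<bar>" by simp
  then show ?thesis using G by (simp add: abs_mult)
qed

lemma sum_abs_sphere:
  assumes "z \<in> unit_sphere_T T"
  shows "(\<Sum>j\<in>T. \<bar>z j\<bar>) \<le> sqrt (real (card T))"
proof -
  have "(\<Sum>j\<in>T. \<bar>z j\<bar> * \<bar>(\<lambda>_. 1::real) j\<bar>) \<le> L2_set z T * L2_set (\<lambda>_. 1::real) T"
    by (rule L2_set_mult_ineq)
  then show ?thesis using assms unfolding unit_sphere_T_def nT_L2 by (simp add: L2_set_constant)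
qed

lemma net_exists:
  assumes T: "finite T" "T \<noteq> {}" and eps: "0 < \<epsilon>" "\<epsilon> \<le> 1"
    and R: "2 * real (card T) / \<epsilon> \<le> real R"
  shows "\<exists>N. finite N \<and> N \<subseteq> unit_sphere_T T \<and> real (card N) \<le> 2 ^ R * 3 ^ card T \<and>
     (\<forall>z \<in> unit_sphere_T T. \<exists>y \<in> N. norm_T T (\<lambda>j. z j - y j) \<le> \<epsilon>)"
proof -
  define t where "t = card T"
  have t0: "0 < t" using T by (simp add: t_def card_gt_0_iff)
  define h where "h = \<epsilon> / (2 * sqrt t)"
  have h0: "0 < h" using eps t0 by (simp add: h_def)
  define g where "g = (\<lambda>(m::nat \<Rightarrow> int) j. if j \<in> T then h * real_of_int (m j) else 0)"
  define nrm where "nrm = (\<lambda>(v::nat \<Rightarrow> real) j. v j / norm_T T v)"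
  define P where "P = PiE T (\<lambda>_. {- int R..int R})"
  define M where "M = {m \<in> P. (\<Sum>j\<in>T. \<bar>m j\<bar>) \<le> int R}"
  define N where "N = (\<lambda>m. nrm (g m)) ` {m \<in> M. norm_T T (g m) \<noteq> 0}"
  have fP: "finite P" unfolding P_def using T by (intro finite_PiE) auto
  have fM: "finite M" unfolding M_def using fP by simp
  have finN: "finite N" unfolding N_def using fM by simp
  have NS: "N \<subseteq> unit_sphere_T T" unfolding N_def nrm_def using nrm_sphere by auto
  have "card N \<le> card {m \<in> M. norm_T T (g m) \<noteq> 0}" unfolding N_def by (rule card_image_le) (use fM in simp)
  also have "\<dots> \<le> card M" using fM by (intro card_mono) auto
  finally have "real (card N) \<le> real (card M)" by simp
  also have "\<dots> \<le> 2 ^ R * 3 ^ card T" unfolding M_def P_def by (rule card_grid[OF T(1)])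
  finally have cardN: "real (card N) \<le> 2 ^ R * 3 ^ card T" .
  have approx: "\<exists>y \<in> N. norm_T T (\<lambda>j. z j - y j) \<le> \<epsilon>" if zS: "z \<in> unit_sphere_T T" for z
  proof -
    define m where "m = (\<lambda>j. if j \<in> T then (if 0 \<le> z j then \<lfloor>z j / h\<rfloor> else \<lceil>z j / h\<rceil>) else undefined)"
    have m1: "\<bar>real_of_int (m j)\<bar> \<le> \<bar>z j\<bar> / h" if "j \<in> T" for j
      using round_toward_zero(1)[OF h0, of "z j"] that unfolding m_def by simp
    have m2: "\<bar>z j - h * real_of_int (m j)\<bar> \<le> h" if "j \<in> T" for j
      using round_toward_zero(2)[OF h0, of "z j"] that unfolding m_def by simp
    have "(\<Sum>j\<in>T. \<bar>real_of_int (m j)\<bar>) \<le> (\<Sum>j\<in>T. \<bar>z j\<bar> / h)"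
      by (intro sum_mono m1)
    also have "\<dots> = (\<Sum>j\<in>T. \<bar>z j\<bar>) / h" by (simp add: sum_divide_distrib)
    also have "\<dots> \<le> sqrt t / h" using sum_abs_sphere[OF zS] h0 unfolding t_def
      by (intro divide_right_mono) auto
    also have "\<dots> = 2 * real t / \<epsilon>"
    proof -
      have "sqrt t * sqrt t = t" using t0 by simp
      then show ?thesis unfolding h_def using eps t0 by (simp add: field_simps)
    qed
    also have "\<dots> \<le> R" using R unfolding t_def .
    finally have "real_of_int (\<Sum>j\<in>T. \<bar>m j\<bar>) \<le> real_of_int (int R)" by simp
    then have msum: "(\<Sum>j\<in>T. \<bar>m j\<bar>) \<le> int R" by (simp only: of_int_le_iff)
    have mP: "m \<in> P"
    proof -
      have "\<bar>m j\<bar> \<le> int R" if "j \<in> T" for j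
      proof -
        have "\<bar>m j\<bar> \<le> (\<Sum>j\<in>T. \<bar>m j\<bar>)" using that _ T(1)
          by (rule member_le_sum) auto
        then show ?thesis using msum by linarith
      qed
      then have "\<forall>j\<in>T. m j \<in> {- int R..int R}" by (force simp: abs_le_iff)
      moreover have "m \<in> extensional T" unfolding m_def extensional_def by simp
      ultimately show ?thesis unfolding P_def PiE_iff by blast
    qed
    have mM: "m \<in> M" unfolding M_def using mP msum by simp
    let ?g = "g m"
    have dz: "norm_T T (\<lambda>j. z j - ?g j) \<le> \<epsilon> / 2"
    proof -
      have "(\<Sum>j\<in>T. (z j - ?g j)\<^sup>2) \<le> (\<Sum>j\<in>T. h\<^sup>2)"
      proof (intro sum_mono)
        fix j assume j: "j \<in> T"
        have "\<bar>z j - ?g j\<bar> \<le> h" using m2[OF j] j unfolding g_def by simp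
        then have "\<bar>z j - ?g j\<bar>\<^sup>2 \<le> h\<^sup>2" by (rule power_mono) simp
        then show "(z j - ?g j)\<^sup>2 \<le> h\<^sup>2" by simp
      qed
      also have "\<dots> = t * h\<^sup>2" by (simp add: t_def)
      finally have "norm_T T (\<lambda>j. z j - ?g j) \<le> sqrt (t * h\<^sup>2)"
        unfolding norm_T_def by (rule real_sqrt_le_mono)
      also have "\<dots> = sqrt t * h" using h0 by (simp add: real_sqrt_mult)
      also have "\<dots> = \<epsilon> / 2" unfolding h_def using t0 by simp
      finally show ?thesis .
    qed
    have nz: "norm_T T z = 1" using zS by (simp add: unit_sphere_T_def)
    have t1: "norm_T T z \<le> norm_T T (\<lambda>j. z j - ?g j) + norm_T T ?g"
      using nT_tri[of T "\<lambda>j. z j - ?g j" ?g] by simp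
    have t2: "norm_T T ?g \<le> norm_T T (\<lambda>j. z j - ?g j) + norm_T T z"
      using nT_tri[of T "\<lambda>j. ?g j - z j" z] nT_swap[of T ?g z] by simp
    have gpos: "norm_T T ?g > 0" using t1 nz dz eps by linarith
    have ymem: "nrm ?g \<in> N" unfolding N_def using mM gpos by auto
    have "norm_T T (\<lambda>j. ?g j - nrm ?g j) = norm_T T (\<lambda>j. (1 - 1 / norm_T T ?g) * ?g j)"
      unfolding nrm_def by (simp add: algebra_simps)
    also have "\<dots> = \<bar>1 - 1 / norm_T T ?g\<bar> * norm_T T ?g" by (rule nT_scale)
    also have "\<dots> = \<bar>norm_T T ?g - 1\<bar>" using gpos by (rule abs_aux)
    also have "\<dots> \<le> norm_T T (\<lambda>j. z j - ?g j)" using t1 t2 nz by linarith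
    finally have gy: "norm_T T (\<lambda>j. ?g j - nrm ?g j) \<le> norm_T T (\<lambda>j. z j - ?g j)" .
    have "norm_T T (\<lambda>j. z j - nrm ?g j) \<le> \<epsilon>"
      using nT_sub_tri[of T z "nrm ?g" ?g] gy dz by linarith
    then show ?thesis using ymem by blast
  qed
  show ?thesis using finN NS cardN approx by blast
qed



lemma approx_k:
  assumes k: "k \<in> {2, 3}" and T: "finite T" "T \<noteq> {}" and zS: "z \<in> unit_sphere_T T" and yS: "y \<in> unit_sphere_T T"
    and eta: "0 < \<eta>" "\<eta> \<le> 1" and d: "norm_T T (\<lambda>j. z j - y j) \<le> \<eta> ^ 3"
  shows "\<bar>Af n w x k T z - Af n w x k T y\<bar> \<le> 14 * \<eta>\<^sup>2 * (SUP z \<in> unit_sphere_T T. \<bar>Af n w x k T z\<bar>)"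
proof -
  have F0: "0 \<le> (SUP z \<in> unit_sphere_T T. \<bar>Af n w x k T z\<bar>)" by (rule SUP_abs_nonneg[OF T])
  have e0: "0 \<le> \<eta>\<^sup>2" by simp
  show ?thesis
  proof (cases "k = 2")
    case True
    have "\<bar>Af n w x k T z - Af n w x k T y\<bar> \<le> 5 * \<eta>\<^sup>2 * (SUP z \<in> unit_sphere_T T. \<bar>Af n w x k T z\<bar>)"
      unfolding True by (rule approx2[OF T zS yS eta d])
    also have "\<dots> \<le> 14 * \<eta>\<^sup>2 * (SUP z \<in> unit_sphere_T T. \<bar>Af n w x k T z\<bar>)"
      using F0 e0 by (intro mult_right_mono) auto
    finally show ?thesis .
  next
    case False
    then have k3: "k = 3" using k by auto
    have "\<bar>Af n w x k T z - Af n w x k T y\<bar> \<le> 14 * \<eta> ^ 3 * (SUP z \<in> unit_sphere_T T. \<bar>Af n w x k T z\<bar>)"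
      unfolding k3 by (rule approx3[OF T zS yS eta d])
    also have "\<dots> \<le> 14 * \<eta>\<^sup>2 * (SUP z \<in> unit_sphere_T T. \<bar>Af n w x k T z\<bar>)"
    proof -
      have "\<eta> ^ 3 \<le> \<eta>\<^sup>2" using eta by (simp add: power3_eq_cube power2_eq_square mult_left_le_one_le)
      then show ?thesis using F0 by (intro mult_right_mono) auto
    qed
    finally show ?thesis .
  qed
qed

lemma net_control:
  assumes k: "k \<in> {2, 3}" and T: "finite T" "T \<noteq> {}" and NS: "N \<subseteq> unit_sphere_T T"
    and cov: "\<forall>z \<in> unit_sphere_T T. \<exists>y \<in> N. norm_T T (\<lambda>j. z j - y j) \<le> 1 / 1000"
    and B: "\<forall>y \<in> N. \<bar>Af n w x k T y\<bar> \<le> B"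
  shows "(SUP z \<in> unit_sphere_T T. \<bar>Af n w x k T z\<bar>) \<le> 50 / 43 * B"
proof -
  define F where "F = (SUP z \<in> unit_sphere_T T. \<bar>Af n w x k T z\<bar>)"
  have "F \<le> B + 14 / 100 * F"
    unfolding F_def
  proof (rule cSUP_least)
    show "unit_sphere_T T \<noteq> {}" by (rule sphere_nonempty[OF T])
  next
    fix z assume zS: "z \<in> unit_sphere_T T"
    obtain y where y: "y \<in> N" "norm_T T (\<lambda>j. z j - y j) \<le> 1 / 1000" using cov zS by blast
    have "\<bar>Af n w x k T z - Af n w x k T y\<bar> \<le> 14 * (1/10)\<^sup>2 * (SUP z \<in> unit_sphere_T T. \<bar>Af n w x k T z\<bar>)"
      by (rule approx_k[OF k T zS]) (use y NS in \<open>auto simp: power3_eq_cube\<close>)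
    then show "\<bar>Af n w x k T z\<bar> \<le> B + 14 / 100 * (SUP z \<in> unit_sphere_T T. \<bar>Af n w x k T z\<bar>)"
    proof -
      have "\<bar>Af n w x k T y\<bar> \<le> B" using B y by blast
      moreover have "\<bar>Af n w x k T z\<bar> \<le> \<bar>Af n w x k T z - Af n w x k T y\<bar> + \<bar>Af n w x k T y\<bar>" by linarith
      ultimately show ?thesis using \<open>\<bar>Af n w x k T z - Af n w x k T y\<bar> \<le> _\<close> by (simp add: power2_eq_square)
    qed
  qed
  then show ?thesis unfolding F_def by simp
qed

lemma exact_control:
  assumes T: "finite T" "T \<noteq> {}"
    and cov: "\<forall>z \<in> unit_sphere_T T. \<exists>y \<in> N. \<forall>j \<in> T. z j = y j"
    and B: "\<forall>y \<in> N. \<bar>Af n w x k T y\<bar> \<le> B"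
  shows "(SUP z \<in> unit_sphere_T T. \<bar>Af n w x k T z\<bar>) \<le> B"
proof (rule cSUP_least)
  show "unit_sphere_T T \<noteq> {}" by (rule sphere_nonempty[OF T])
next
  fix z assume zS: "z \<in> unit_sphere_T T"
  obtain y where y: "y \<in> N" "\<forall>j \<in> T. z j = y j" using cov zS by blast
  have "Af n w x k T z = Af n w x k T y" unfolding Af_def
    using ip_local[of T z y] y by simp
  then show "\<bar>Af n w x k T z\<bar> \<le> B" using B y by simp
qed

lemma Lambda_le_SUP_abs:
  assumes T: "finite T" "T \<noteq> {}"
  shows "Lambda_max T (Af n w x k T) \<le> (SUP z \<in> unit_sphere_T T. \<bar>Af n w x k T z\<bar>)"
  unfolding Lambda_max_def
proof (rule cSUP_least)
  show "unit_sphere_T T \<noteq> {}" by (rule sphere_nonempty[OF T])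
next
  fix z assume zS: "z \<in> unit_sphere_T T"
  have "\<bar>Af n w x k T z\<bar> \<le> (SUP z \<in> unit_sphere_T T. \<bar>Af n w x k T z\<bar>)"
    by (rule cSUP_upper[OF zS Af_bdd_above])
  then show "Af n w x k T z \<le> (SUP z \<in> unit_sphere_T T. \<bar>Af n w x k T z\<bar>)" by linarith
qed



lemma lim_le:
  fixes a c K :: real
  assumes "\<And>m::nat. a \<le> c + K / (real m + 1)"
  shows "a \<le> c"
proof (rule ccontr)
  assume "\<not> a \<le> c"
  then have ac: "0 < a - c" by simp
  obtain m :: nat where m: "K < real m * (a - c)" using ex_less_of_nat_mult[OF ac] by blast
  have "K < (real m + 1) * (a - c)" using m ac by (simp add: algebra_simps)
  then have "K / (real m + 1) < a - c" by (simp add: divide_less_eq mult.commute)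
  then show False using assms[of m] by linarith
qed

lemma Af_bdd_above':
  "bdd_above ((\<lambda>z. Af n w x k T z) ` unit_sphere_T T)"
  by (rule bdd_aboveI2[where M="\<Sum>i<n. \<bar>w i\<bar> * (norm_T T (x i)) ^ k"])
     (use Af_bdd[of _ T n w x k] in force)

lemma Lambda_ge:
  "y \<in> unit_sphere_T T \<Longrightarrow> Af n w x k T y \<le> Lambda_max T (Af n w x k T)"
  unfolding Lambda_max_def by (rule cSUP_upper[OF _ Af_bdd_above'])

lemma event_meas:
  assumes k: "k \<in> {2, 3}" and T: "finite T" "T \<noteq> {}"
  shows "{\<omega> \<in> space (gauss_measure n). Lambda_max T (Af n (\<lambda>i. ((\<omega> i)\<^sup>2 - 1) / n) x k T) \<le> c}
           \<in> sets (gauss_measure n)"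
proof -
  let ?S = "unit_sphere_T T"
  have "\<exists>N. finite N \<and> N \<subseteq> ?S \<and> (\<forall>z\<in>?S. \<exists>y\<in>N. norm_T T (\<lambda>j. z j - y j) \<le> (1 / (real m + 1)) ^ 3)" for m :: nat
  proof -
    define \<epsilon> where "\<epsilon> = (1 / (real m + 1)) ^ 3"
    have e0: "0 < \<epsilon>" unfolding \<epsilon>_def by simp
    have e1: "\<epsilon> \<le> 1" unfolding \<epsilon>_def by (simp add: power_le_one)
    have R: "2 * real (card T) / \<epsilon> \<le> real (nat \<lceil>2 * real (card T) / \<epsilon>\<rceil>)" by (rule real_nat_ceiling_ge)
    show ?thesis using net_exists[OF T e0 e1 R] unfolding \<epsilon>_def by blast
  qed
  then obtain Nf where Nf: "\<And>m::nat. finite (Nf m) \<and> Nf m \<subseteq> ?S \<and> (\<forall>z\<in>?S. \<exists>y\<in>Nf m. norm_T T (\<lambda>j. z j - y j) \<le> (1 / (real m + 1)) ^ 3)"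
    by metis
  define D where "D = (\<Union>m. Nf m)"
  have cD: "countable D" unfolding D_def using Nf by (intro countable_UN) (auto intro: countable_finite)
  have DS: "D \<subseteq> ?S" unfolding D_def using Nf by blast
  have Dne: "D \<noteq> {}"
  proof -
    obtain z where "z \<in> ?S" using sphere_nonempty[OF T] by blast
    then obtain y where "y \<in> Nf 0" using Nf[of 0] by blast
    then show ?thesis unfolding D_def by blast
  qed
  have claim: "Lambda_max T (Af n w x k T) \<le> c \<longleftrightarrow> (\<forall>y\<in>D. Af n w x k T y \<le> c)" for w
  proof
    assume "Lambda_max T (Af n w x k T) \<le> c"
    then show "\<forall>y\<in>D. Af n w x k T y \<le> c" using Lambda_ge[of _ T n w x k] DS by force
  next
    assume H: "\<forall>y\<in>D. Af n w x k T y \<le> c"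
    define F where "F = (SUP z \<in> ?S. \<bar>Af n w x k T z\<bar>)"
    have F0: "0 \<le> F" unfolding F_def by (rule SUP_abs_nonneg[OF T])
    show "Lambda_max T (Af n w x k T) \<le> c"
      unfolding Lambda_max_def
    proof (rule cSUP_least)
      show "?S \<noteq> {}" by (rule sphere_nonempty[OF T])
    next
      fix z assume zS: "z \<in> ?S"
      show "Af n w x k T z \<le> c"
      proof (rule lim_le[where K="14 * F"])
        fix m :: nat
        define \<eta> where "\<eta> = 1 / (real m + 1)"
        have eta: "0 < \<eta>" "\<eta> \<le> 1" unfolding \<eta>_def by auto
        obtain y where y: "y \<in> Nf m" "norm_T T (\<lambda>j. z j - y j) \<le> \<eta> ^ 3"
          using Nf[of m] zS unfolding \<eta>_def by blast
        have yS: "y \<in> ?S" using y Nf by blast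
        have "\<bar>Af n w x k T z - Af n w x k T y\<bar> \<le> 14 * \<eta>\<^sup>2 * F"
          unfolding F_def by (rule approx_k[OF k T zS yS eta y(2)])
        also have "\<dots> \<le> 14 * \<eta> * F"
        proof -
          have "\<eta>\<^sup>2 \<le> \<eta>" using eta by (simp add: power2_eq_square mult_left_le_one_le)
          then show ?thesis using F0 by (intro mult_right_mono) auto
        qed
        finally have "\<bar>Af n w x k T z - Af n w x k T y\<bar> \<le> 14 * F / (real m + 1)"
          unfolding \<eta>_def by simp
        moreover have "Af n w x k T y \<le> c" using H y unfolding D_def by blast
        ultimately show "Af n w x k T z \<le> c + 14 * F / (real m + 1)" by linarith
      qed
    qed
  qed
  have eq: "{\<omega> \<in> space (gauss_measure n). Lambda_max T (Af n (\<lambda>i. ((\<omega> i)\<^sup>2 - 1) / n) x k T) \<le> c}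
      = (\<Inter>y\<in>D. {\<omega> \<in> space (gauss_measure n). Af n (\<lambda>i. ((\<omega> i)\<^sup>2 - 1) / n) x k T y \<le> c})"
    using claim Dne by auto
  show ?thesis unfolding eq
  proof (rule sets.countable_INT'[OF cD Dne])
    show "(\<lambda>y. {\<omega> \<in> space (gauss_measure n). Af n (\<lambda>i. ((\<omega> i)\<^sup>2 - 1) / n) x k T y \<le> c}) ` D
        \<subseteq> sets (gauss_measure n)"
      unfolding Af_def by (auto intro!: pred_intros_logic) measurable
  qed
qed



lemma main_prob:
  fixes n :: nat and x :: "nat \<Rightarrow> nat \<Rightarrow> real" and T :: "nat set" and \<delta> K \<gamma> L :: real
  assumes k: "k \<in> {2, 3}" and n0: "0 < n" and T: "finite T" "T \<noteq> {}"
    and d: "0 < \<delta>" "\<delta> < 1"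
    and N: "finite N" "N \<subseteq> unit_sphere_T T" "real (card N) \<le> K" "1 \<le> K"
    and g1: "1 \<le> \<gamma>"
    and gL: "\<gamma>\<^sup>2 * ln (2 * K / \<delta>) \<le> real (card T) * L"
    and ctrl: "\<And>w B. (\<forall>y \<in> N. \<bar>Af n w x k T y\<bar> \<le> B) \<Longrightarrow>
                 (SUP z \<in> unit_sphere_T T. \<bar>Af n w x k T z\<bar>) \<le> \<gamma> * B"
  shows "measure (gauss_measure n)
         {\<omega> \<in> space (gauss_measure n).
            Lambda_max T (\<lambda>z. (1 / real n) * (\<Sum>i<n. (\<omega> i)\<^sup>2 * (ip_T T (x i) z) ^ k)
                               - (1 / real n) * (\<Sum>i<n. (ip_T T (x i) z) ^ k))
            \<le> (2 / real n) *
               (sqrt (real (card T) * real n *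
                      Lambda_max T (\<lambda>z. (1 / real n) * (\<Sum>i<n. (ip_T T (x i) z) ^ (2 * k)))
                      * L)
                + real (card T) * (MAX i \<in> {..<n}. (norm_T T (x i)) ^ k) * L)}
       \<ge> 1 - \<delta>"
proof -
  interpret G: prob_space "gauss_measure n" by (rule G_prob)
  let ?S = "unit_sphere_T T"
  define W where "W = (\<lambda>(\<omega>::nat \<Rightarrow> real) i. ((\<omega> i)\<^sup>2 - 1) / real n)"
  define \<Lambda>2 where "\<Lambda>2 = Lambda_max T (\<lambda>z. (1 / real n) * (\<Sum>i<n. (ip_T T (x i) z) ^ (2 * k)))"
  define M where "M = (MAX i \<in> {..<n}. (norm_T T (x i)) ^ k)"
  define t where "t = real (card T)"
  define V where "V = real n * \<Lambda>2"
  define u where "u = ln (2 * K / \<delta>)"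
  define thr where "thr = 2 * sqrt (V * u) + 2 * M * u"
  define RHS where "RHS = (2 / real n) * (sqrt (t * real n * \<Lambda>2 * L) + t * M * L)"
  have fun_eq: "(\<lambda>z. (1 / real n) * (\<Sum>i<n. (\<omega> i)\<^sup>2 * (ip_T T (x i) z) ^ k)
                               - (1 / real n) * (\<Sum>i<n. (ip_T T (x i) z) ^ k)) = Af n (W \<omega>) x k T" for \<omega>
    unfolding Af_def W_def
    by (rule ext) (simp add: sum_distrib_left sum_subtractf[symmetric] diff_divide_distrib algebra_simps)
  have L2eq: "(\<lambda>z. (1 / real n) * (\<Sum>i<n. (ip_T T (x i) z) ^ (2 * k))) = Af n (\<lambda>_. 1 / real n) x (2 * k) T"
    unfolding Af_def by (rule ext) (simp add: sum_distrib_left)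
  have sq: "(\<Sum>i<n. ((ip_T T (x i) y) ^ k)\<^sup>2) \<le> V" if yS: "y \<in> ?S" for y
  proof -
    have "Af n (\<lambda>_. 1 / real n) x (2 * k) T y \<le> \<Lambda>2"
      unfolding \<Lambda>2_def L2eq by (rule Lambda_ge[OF yS])
    then have "(1 / real n) * (\<Sum>i<n. (ip_T T (x i) y) ^ (2 * k)) \<le> \<Lambda>2"
      unfolding Af_def by (simp add: sum_distrib_left)
    then have "(\<Sum>i<n. (ip_T T (x i) y) ^ (2 * k)) \<le> real n * \<Lambda>2"
      using n0 by (simp add: divide_le_eq mult.commute)
    then show ?thesis unfolding V_def by (simp add: power_mult[symmetric] mult.commute)
  qed
  have V0: "0 \<le> V"
  proof -
    obtain y where "y \<in> ?S" using sphere_nonempty[OF T] by blast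
    from sq[OF this] show ?thesis by (smt (verit) sum_nonneg zero_le_power2)
  qed
  have Mb: "\<bar>(ip_T T (x i) y) ^ k\<bar> \<le> M" if yS: "y \<in> ?S" and i: "i < n" for y i
  proof -
    have "\<bar>ip_T T (x i) y\<bar> \<le> norm_T T (x i)"
      using ip_CS[of T "x i" y] yS by (simp add: unit_sphere_T_def)
    then have "\<bar>ip_T T (x i) y\<bar> ^ k \<le> (norm_T T (x i)) ^ k" by (rule power_mono) simp
    also have "\<dots> \<le> M" unfolding M_def using i by (intro Max_ge) auto
    finally show ?thesis by (simp add: power_abs)
  qed
  have M0: "0 \<le> M"
  proof -
    have "0 \<le> (norm_T T (x 0)) ^ k" by simp
    also have "\<dots> \<le> M" unfolding M_def using n0 by (intro Max_ge) auto
    finally show ?thesis .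
  qed
  have K0: "0 < K" using N by simp
  have u1: "1 < 2 * K / \<delta>" using d N(4) by (simp add: field_simps)
  have u0: "0 < u" unfolding u_def using u1 by simp
  have eu: "exp (- u) = \<delta> / (2 * K)"
    unfolding u_def using u1 d K0 by (simp add: exp_minus exp_ln)
  define a where "a = (\<lambda>y i. (ip_T T (x i) y) ^ k)"
  define Bad where "Bad = (\<lambda>y. {\<omega> \<in> space (gauss_measure n). (\<Sum>i<n. a y i * ((\<omega> i)\<^sup>2 - 1)) > thr}
      \<union> {\<omega> \<in> space (gauss_measure n). (\<Sum>i<n. (- a y i) * ((\<omega> i)\<^sup>2 - 1)) > thr})"
  have Bad_sets: "Bad y \<in> sets (gauss_measure n)" for y
    unfolding Bad_def by measurable
  have Bad_meas: "measure (gauss_measure n) (Bad y) \<le> 2 * exp (- u)" if yS: "y \<in> ?S" for y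
  proof -
    have s1: "(\<Sum>i<n. (a y i)\<^sup>2) \<le> V" using sq[OF yS] unfolding a_def .
    have s2: "(\<Sum>i<n. (- a y i)\<^sup>2) \<le> V" using s1 by simp
    have c1: "\<And>i. i < n \<Longrightarrow> \<bar>a y i\<bar> \<le> M" using Mb[OF yS] unfolding a_def by blast
    have c2: "\<And>i. i < n \<Longrightarrow> \<bar>- a y i\<bar> \<le> M" using c1 by simp
    have "measure (gauss_measure n) (Bad y)
        \<le> measure (gauss_measure n) {\<omega> \<in> space (gauss_measure n). (\<Sum>i<n. a y i * ((\<omega> i)\<^sup>2 - 1)) > thr}
          + measure (gauss_measure n) {\<omega> \<in> space (gauss_measure n). (\<Sum>i<n. (- a y i) * ((\<omega> i)\<^sup>2 - 1)) > thr}"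
      unfolding Bad_def by (rule measure_Un_le) measurable
    also have "\<dots> \<le> exp (- u) + exp (- u)"
      unfolding thr_def using tail[OF s1 c1 M0 u0] tail[OF s2 c2 M0 u0] by (intro add_mono) auto
    finally show ?thesis by simp
  qed
  define Good where "Good = space (gauss_measure n) - (\<Union>y\<in>N. Bad y)"
  have UB: "measure (gauss_measure n) (\<Union>y\<in>N. Bad y) \<le> \<delta>"
  proof -
    have "measure (gauss_measure n) (\<Union>y\<in>N. Bad y) \<le> (\<Sum>y\<in>N. measure (gauss_measure n) (Bad y))"
      by (rule measure_UNION_le[OF N(1) Bad_sets])
    also have "\<dots> \<le> (\<Sum>y\<in>N. 2 * exp (- u))"
      using N(2) Bad_meas by (intro sum_mono) auto
    also have "\<dots> = real (card N) * (2 * exp (- u))" by simp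
    also have "\<dots> \<le> K * (2 * exp (- u))" using N(3) by (intro mult_right_mono) auto
    also have "\<dots> = \<delta>" unfolding eu using K0 by simp
    finally show ?thesis .
  qed
  have mGood: "measure (gauss_measure n) Good \<ge> 1 - \<delta>"
  proof -
    have "measure (gauss_measure n) Good = 1 - measure (gauss_measure n) (\<Union>y\<in>N. Bad y)"
      unfolding Good_def by (rule G.prob_compl) (use N(1) Bad_sets in auto)
    then show ?thesis using UB by simp
  qed
  have fin: "\<gamma> * (thr / real n) \<le> RHS"
  proof -
    have gu: "\<gamma>\<^sup>2 * u \<le> t * L" using gL unfolding u_def t_def .
    have g0: "0 \<le> \<gamma>" using g1 by simp
    have "\<gamma> * sqrt (V * u) = sqrt (\<gamma>\<^sup>2 * V * u)" using g0 V0 u0 by (simp add: real_sqrt_mult)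
    also have "\<dots> \<le> sqrt (t * real n * \<Lambda>2 * L)"
    proof (rule real_sqrt_le_mono)
      have "\<gamma>\<^sup>2 * V * u = V * (\<gamma>\<^sup>2 * u)" by simp
      also have "\<dots> \<le> V * (t * L)" using gu V0 by (intro mult_left_mono) auto
      also have "\<dots> = t * real n * \<Lambda>2 * L" unfolding V_def by simp
      finally show "\<gamma>\<^sup>2 * V * u \<le> t * real n * \<Lambda>2 * L" .
    qed
    finally have A1: "\<gamma> * sqrt (V * u) \<le> sqrt (t * real n * \<Lambda>2 * L)" .
    have "\<gamma> * u \<le> \<gamma>\<^sup>2 * u"
      using g1 u0 by (intro mult_right_mono) (auto simp: power2_eq_square)
    then have "\<gamma> * u \<le> t * L" using gu by linarith
    then have A2: "\<gamma> * (M * u) \<le> t * M * L"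
      using M0 mult_left_mono[of "\<gamma> * u" "t * L" M] by (simp add: algebra_simps)
    have "\<gamma> * thr \<le> 2 * (sqrt (t * real n * \<Lambda>2 * L) + t * M * L)"
      unfolding thr_def using A1 A2 by (simp add: algebra_simps)
    then have "\<gamma> * thr / real n \<le> 2 * (sqrt (t * real n * \<Lambda>2 * L) + t * M * L) / real n"
      using n0 by (intro divide_right_mono) auto
    then show ?thesis unfolding RHS_def by simp
  qed
  have GoodT: "Good \<subseteq> {\<omega> \<in> space (gauss_measure n). Lambda_max T (Af n (W \<omega>) x k T) \<le> RHS}"
  proof
    fix \<omega> assume \<omega>: "\<omega> \<in> Good"
    then have sp: "\<omega> \<in> space (gauss_measure n)" unfolding Good_def by blast
    have "\<forall>y\<in>N. \<bar>Af n (W \<omega>) x k T y\<bar> \<le> thr / real n"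
    proof
      fix y assume y: "y \<in> N"
      then have nb: "\<omega> \<notin> Bad y" using \<omega> unfolding Good_def by blast
      have e1: "(\<Sum>i<n. a y i * ((\<omega> i)\<^sup>2 - 1)) \<le> thr" using nb sp unfolding Bad_def by auto
      have e2: "(\<Sum>i<n. (- a y i) * ((\<omega> i)\<^sup>2 - 1)) \<le> thr" using nb sp unfolding Bad_def by auto
      have e3: "(\<Sum>i<n. (- a y i) * ((\<omega> i)\<^sup>2 - 1)) = - (\<Sum>i<n. a y i * ((\<omega> i)\<^sup>2 - 1))"
        by (simp add: sum_negf[symmetric])
      have "Af n (W \<omega>) x k T y = (\<Sum>i<n. a y i * ((\<omega> i)\<^sup>2 - 1)) / real n"
        unfolding Af_def W_def a_def by (simp add: sum_divide_distrib mult.commute)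
      then show "\<bar>Af n (W \<omega>) x k T y\<bar> \<le> thr / real n"
        using e1 e2 e3 n0 by (simp add: divide_le_eq abs_le_iff)
    qed
    then have "(SUP z \<in> ?S. \<bar>Af n (W \<omega>) x k T z\<bar>) \<le> \<gamma> * (thr / real n)" by (rule ctrl)
    then have "Lambda_max T (Af n (W \<omega>) x k T) \<le> RHS"
      using Lambda_le_SUP_abs[OF T, of n "W \<omega>" x k] fin by linarith
    then show "\<omega> \<in> {\<omega> \<in> space (gauss_measure n). Lambda_max T (Af n (W \<omega>) x k T) \<le> RHS}" using sp by blast
  qed
  have Tmeas: "{\<omega> \<in> space (gauss_measure n). Lambda_max T (Af n (W \<omega>) x k T) \<le> RHS} \<in> sets (gauss_measure n)"
    unfolding W_def by (rule event_meas[OF k T])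
  have "1 - \<delta> \<le> measure (gauss_measure n) {\<omega> \<in> space (gauss_measure n). Lambda_max T (Af n (W \<omega>) x k T) \<le> RHS}"
    using mGood G.finite_measure_mono[OF GoodT Tmeas] by linarith
  then show ?thesis unfolding fun_eq RHS_def \<Lambda>2_def M_def t_def .
qed



definition Cc :: real where "Cc = 2 ^ 2000 * 3"
definition Xi :: real where "Xi = 2 * Cc\<^sup>2"

lemma Cc_ge: "2 \<le> Cc"
proof -
  have "(1::real) \<le> 2 ^ 2000" by (rule one_le_power) simp
  then have "1 * 3 \<le> (2::real) ^ 2000 * 3" by (rule mult_right_mono) simp
  then show ?thesis unfolding Cc_def by linarith
qed

lemma Xi_ge: "4 \<le> Xi"
proof -
  have "2 * 2 \<le> Cc * Cc" using Cc_ge by (intro mult_mono) auto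
  then show ?thesis unfolding Xi_def power2_eq_square by linarith
qed

lemma net_choice:
  assumes k: "k \<in> {2, 3}" and T: "finite T" "T \<noteq> {}" and d: "0 < \<delta>" "\<delta> < 1"
  shows "\<exists>N K \<gamma>. finite N \<and> N \<subseteq> unit_sphere_T T \<and> real (card N) \<le> K \<and> 1 \<le> K \<and> 1 \<le> \<gamma> \<and>
     \<gamma>\<^sup>2 * ln (2 * K / \<delta>) \<le> real (card T) * ln (Xi / \<delta>) \<and>
     (\<forall>n w x B. (\<forall>y \<in> N. \<bar>Af n w x k T y\<bar> \<le> B) \<longrightarrow>
        (SUP z \<in> unit_sphere_T T. \<bar>Af n w x k T z\<bar>) \<le> \<gamma> * B)"
proof (cases "card T = 1")
  case True
  then obtain j0 where T1: "T = {j0}" by (auto simp: card_Suc_eq)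
  define N where "N = {(\<lambda>_::nat. 1::real), (\<lambda>_::nat. -1)}"
  have NS: "N \<subseteq> unit_sphere_T T" unfolding N_def unit_sphere_T_def norm_T_def T1 by simp
  have cN: "real (card N) \<le> 2" unfolding N_def by (simp add: card_insert_if)
  have cov: "\<forall>z \<in> unit_sphere_T T. \<exists>y \<in> N. \<forall>j \<in> T. z j = y j"
  proof
    fix z assume "z \<in> unit_sphere_T T"
    then have "\<bar>z j0\<bar> = 1" unfolding unit_sphere_T_def norm_T_def T1 by simp
    then have "z j0 = 1 \<or> z j0 = -1" by auto
    then show "\<exists>y \<in> N. \<forall>j \<in> T. z j = y j" unfolding N_def T1 by auto
  qed
  have lnb: "1\<^sup>2 * ln (2 * 2 / \<delta>) \<le> real (card T) * ln (Xi / \<delta>)"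
    using True d Xi_ge by (simp add: divide_right_mono)
  show ?thesis
    using NS cN cov lnb exact_control[OF T cov] unfolding N_def
    by (intro exI[of _ N] exI[of _ 2] exI[of _ 1]) (auto simp: N_def)
next
  case False
  define t where "t = card T"
  have "card T \<noteq> 0" using T by simp
  then have t2: "2 \<le> t" using False unfolding t_def by linarith
  have e0: "0 < (1/1000::real)" and e1: "(1/1000::real) \<le> 1" by auto
  have R: "2 * real (card T) / (1/1000) \<le> real (2000 * t)" unfolding t_def by simp
  obtain N where N: "finite N" "N \<subseteq> unit_sphere_T T" "real (card N) \<le> 2 ^ (2000 * t) * 3 ^ card T"
    "\<forall>z\<in>unit_sphere_T T. \<exists>y\<in>N. norm_T T (\<lambda>j. z j - y j) \<le> 1/1000"
    using net_exists[OF T e0 e1 R] by blast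
  have CK: "(2::real) ^ (2000 * t) * 3 ^ card T = Cc ^ t"
    unfolding Cc_def t_def by (simp only: power_mult power_mult_distrib)
  have C0: "0 < Cc" using Cc_ge by simp
  have K1: "1 \<le> Cc ^ t" using Cc_ge by (simp add: one_le_power)
  have lnK: "ln (2 * Cc ^ t / \<delta>) = ln 2 + t * ln Cc - ln \<delta>"
    using d C0 by (simp add: ln_div ln_mult ln_realpow)
  have lnX: "ln (Xi / \<delta>) = ln 2 + 2 * ln Cc - ln \<delta>"
    using d C0 unfolding Xi_def by (simp add: ln_div ln_mult ln_realpow)
  have ld: "ln \<delta> < 0" using d by simp
  have l2: "0 \<le> ln (2::real)" by simp
  have lC: "0 \<le> ln Cc" using Cc_ge by simp
  have pos: "0 \<le> ln (2 * Cc ^ t / \<delta>)" proof -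
    have "0 \<le> real t * ln Cc" using lC by simp
    then show ?thesis unfolding lnK using ld l2 by linarith
  qed
  have "(50/43)\<^sup>2 * ln (2 * Cc ^ t / \<delta>) \<le> 2 * ln (2 * Cc ^ t / \<delta>)"
    using pos by (intro mult_right_mono) (auto simp: power2_eq_square)
  also have "\<dots> \<le> real t * ln (Xi / \<delta>)"
  proof -
    have a: "2 * ln 2 \<le> real t * ln (2::real)" using t2 l2 by (intro mult_right_mono) auto
    have b: "- 2 * ln \<delta> \<le> - real t * ln \<delta>" using t2 ld by (intro mult_right_mono_neg) auto
    have c1: "2 * (ln 2 + real t * ln Cc - ln \<delta>) = 2 * ln 2 + 2 * (real t * ln Cc) - 2 * ln \<delta>"
      by (simp add: algebra_simps)
    have c2: "real t * (ln 2 + 2 * ln Cc - ln \<delta>) = real t * ln 2 + 2 * (real t * ln Cc) - real t * ln \<delta>"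
      by (simp add: algebra_simps)
    show ?thesis unfolding lnK lnX c1 c2 using a b by linarith
  qed
  finally have gL: "(50/43)\<^sup>2 * ln (2 * Cc ^ t / \<delta>) \<le> real (card T) * ln (Xi / \<delta>)"
    unfolding t_def .
  have ctrl: "\<forall>n w x B. (\<forall>y \<in> N. \<bar>Af n w x k T y\<bar> \<le> B) \<longrightarrow>
        (SUP z \<in> unit_sphere_T T. \<bar>Af n w x k T z\<bar>) \<le> 50/43 * B"
    using net_control[OF k T N(2) N(4)] by blast
  show ?thesis
    using N(1,2) N(3)[unfolded CK] K1 gL ctrl
    by (intro exI[of _ N] exI[of _ "Cc ^ t"] exI[of _ "50/43"]) auto
qed

theorem lemma4:
  fixes k :: nat
  assumes "k \<in> {2, 3}"
  shows "\<exists>\<xi>::real. \<xi> > 0 \<and>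
    (\<forall>(n::nat) (p::nat) (x::nat \<Rightarrow> nat \<Rightarrow> real) (T::nat set) (\<delta>::real).
       n > 0 \<longrightarrow> T \<subseteq> {..<p} \<longrightarrow> T \<noteq> {} \<longrightarrow> 0 < \<delta> \<longrightarrow> \<delta> < 1 \<longrightarrow>
       measure (gauss_measure n)
         {\<omega> \<in> space (gauss_measure n).
            Lambda_max T (\<lambda>z. (1 / real n) * (\<Sum>i<n. (\<omega> i)\<^sup>2 * (ip_T T (x i) z) ^ k)
                               - (1 / real n) * (\<Sum>i<n. (ip_T T (x i) z) ^ k))
            \<le> (2 / real n) *
               (sqrt (real (card T) * real n *
                      Lambda_max T (\<lambda>z. (1 / real n) * (\<Sum>i<n. (ip_T T (x i) z) ^ (2 * k)))
                      * ln (\<xi> / \<delta>))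
                + real (card T) * (MAX i \<in> {..<n}. (norm_T T (x i)) ^ k) * ln (\<xi> / \<delta>))}
       \<ge> 1 - \<delta>)"
proof (intro exI[of _ Xi] conjI allI impI)
  show "0 < Xi" using Xi_ge by simp
next
  fix n p :: nat and x :: "nat \<Rightarrow> nat \<Rightarrow> real" and T :: "nat set" and \<delta> :: real
  assume n0: "0 < n" and Tp: "T \<subseteq> {..<p}" and Tne: "T \<noteq> {}" and d0: "0 < \<delta>" and d1: "\<delta> < 1"
  have fT: "finite T" using Tp finite_subset by blast
  obtain N K \<gamma> where N: "finite N" "N \<subseteq> unit_sphere_T T" "real (card N) \<le> K" "1 \<le> K"
    and g1: "1 \<le> \<gamma>" and gL: "\<gamma>\<^sup>2 * ln (2 * K / \<delta>) \<le> real (card T) * ln (Xi / \<delta>)"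
    and ctrl: "\<forall>n w x B. (\<forall>y \<in> N. \<bar>Af n w x k T y\<bar> \<le> B) \<longrightarrow>
        (SUP z \<in> unit_sphere_T T. \<bar>Af n w x k T z\<bar>) \<le> \<gamma> * B"
    using net_choice[OF assms fT Tne d0 d1] by blast
  show "measure (gauss_measure n)
         {\<omega> \<in> space (gauss_measure n).
            Lambda_max T (\<lambda>z. (1 / real n) * (\<Sum>i<n. (\<omega> i)\<^sup>2 * (ip_T T (x i) z) ^ k)
                               - (1 / real n) * (\<Sum>i<n. (ip_T T (x i) z) ^ k))
            \<le> (2 / real n) *
               (sqrt (real (card T) * real n *
                      Lambda_max T (\<lambda>z. (1 / real n) * (\<Sum>i<n. (ip_T T (x i) z) ^ (2 * k)))
                      * ln (Xi / \<delta>))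
                + real (card T) * (MAX i \<in> {..<n}. (norm_T T (x i)) ^ k) * ln (Xi / \<delta>))}
       \<ge> 1 - \<delta>"
    by (rule main_prob[OF assms n0 fT Tne d0 d1 N g1 gL]) (use ctrl in blast)
qed


end
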